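(* Let $m\geq1$ and let $S=\bigsqcup_{\mathcal{O}}\mathcal{O}^{a(\mathcal{O})}$ be a finite $F_m^0$-set, where $\mathcal{O}$ runs over isomorphism classes of strongly finite transitive $F_m^0$-sets and the multiplicities $a(\mathcal{O})\in\mathbb{N}$ are almost all zero. Then the $F_m^0$-action on $S$ extends to an $F_m$-action if and only if $a(\mathcal{O})=a(z_1(\mathcal{O}))$ for every strongly finite transitive $F_m^0$-set $\mathcal{O}$.
   Context: $F_m$ is the free group on $z_1,\dots,z_m$, $\upsilon:F_m\to\mathbb{Z}$ the homomorphism with $\upsilon(z_i)=1$ for all $i$, and $F_m^0=\ker\upsilon$. For an $F_m^0$-set $S$ and $t\in\mathbb{Z}$, $z_1^t(S)$ denotes the set $S$ with the $F_m^0$-action $g\cdot s=z_1^{-t}gz_1^ts$. A finite transitive $F_m^0$-set $\mathcal{O}$ is strongly finite if $z_1^k(\mathcal{O})\cong\mathcal{O}$ for some integer $k>0$; then $z_1(\mathcal{O})$ is again strongly finite transitive. *)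

theory Defs
  imports "HOL-Algebra.Group_Action"
begin

text \<open>A letter (i,b) stands for z_i if b = False and for z_i^{-1} if b = True.\<close>
type_synonym fword = "(nat \<times> bool) list"

fun reduced :: "fword \<Rightarrow> bool" where
  "reduced ((i,b) # (j,c) # w) = (\<not> (i = j \<and> b \<noteq> c) \<and> reduced ((j,c) # w))"
| "reduced _ = True"

fun cons_red :: "nat \<times> bool \<Rightarrow> fword \<Rightarrow> fword" where
  "cons_red (i,b) ((j,c) # w) = (if i = j \<and> b \<noteq> c then w else (i,b) # (j,c) # w)"
| "cons_red x [] = [x]"

definition reduce :: "fword \<Rightarrow> fword" where
  "reduce w = foldr cons_red w []"

definition FG :: "nat \<Rightarrow> fword monoid" where
  "FG m = \<lparr> carrier = {w. reduced w \<and> (\<forall>(i,b) \<in> set w. 1 \<le> i \<and> i \<le> m)},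
            mult = (\<lambda>u v. reduce (u @ v)), one = [] \<rparr>"

definition upsilon :: "fword \<Rightarrow> int" where
  "upsilon w = sum_list (map (\<lambda>(i,b). if b then -1 else 1) w)"

definition F0 :: "nat \<Rightarrow> fword monoid" where
  "F0 m = (FG m) \<lparr> carrier := {w \<in> carrier (FG m). upsilon w = 0} \<rparr>"

definition z1 :: fword where "z1 = [(1, False)]"

text \<open>z_1^t(S): same set, action g . s = (z_1^{-t} g z_1^t) s.\<close>
definition zshift :: "nat \<Rightarrow> int \<Rightarrow> (fword \<Rightarrow> 'b \<Rightarrow> 'b) \<Rightarrow> (fword \<Rightarrow> 'b \<Rightarrow> 'b)" where
  "zshift m t \<phi> = (\<lambda>g. \<phi> (inv\<^bsub>FG m\<^esub> (z1 [^]\<^bsub>FG m\<^esub> t) \<otimes>\<^bsub>FG m\<^esub> g \<otimes>\<^bsub>FG m\<^esub> (z1 [^]\<^bsub>FG m\<^esub> t)))"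

definition gset_iso :: "('g, 'x) monoid_scheme \<Rightarrow> 'b set \<Rightarrow> ('g \<Rightarrow> 'b \<Rightarrow> 'b)
    \<Rightarrow> 'c set \<Rightarrow> ('g \<Rightarrow> 'c \<Rightarrow> 'c) \<Rightarrow> bool" where
  "gset_iso G X \<phi> Y \<psi> \<longleftrightarrow> (\<exists>f. bij_betw f X Y \<and>
      (\<forall>g \<in> carrier G. \<forall>x \<in> X. f (\<phi> g x) = \<psi> g (f x)))"

text \<open>Strongly finite transitive F_m^0-set (transitive sets are nonempty).\<close>
definition strongly_finite_transitive :: "nat \<Rightarrow> 'b set \<Rightarrow> (fword \<Rightarrow> 'b \<Rightarrow> 'b) \<Rightarrow> bool" where
  "strongly_finite_transitive m Orb \<phi> \<longleftrightarrow>
     transitive_action (F0 m) Orb \<phi> \<and> Orb \<noteq> {} \<and> finite Orb \<and>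
     (\<exists>k::int. k > 0 \<and> gset_iso (F0 m) Orb (zshift m k \<phi>) Orb \<phi>)"

definition restr_act :: "(fword \<Rightarrow> 'b \<Rightarrow> 'b) \<Rightarrow> 'b set \<Rightarrow> (fword \<Rightarrow> 'b \<Rightarrow> 'b)" where
  "restr_act \<phi> X = (\<lambda>g. restrict (\<phi> g) X)"

definition multiplicity_in :: "nat \<Rightarrow> 'a set \<Rightarrow> (fword \<Rightarrow> 'a \<Rightarrow> 'a) \<Rightarrow> 'b set \<Rightarrow> (fword \<Rightarrow> 'b \<Rightarrow> 'b) \<Rightarrow> nat" where
  "multiplicity_in m S \<phi> Orb \<psi> =
     card {X \<in> orbits (F0 m) S \<phi>. gset_iso (F0 m) X (restr_act \<phi> X) Orb \<psi>}"

end

theory Submission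
  imports Defs
begin


definition flp :: "nat \<times> bool \<Rightarrow> nat \<times> bool" where "flp x = (fst x, \<not> snd x)"
definition winv :: "fword \<Rightarrow> fword" where "winv w = rev (map flp w)"

lemma flp_flp[simp]: "flp (flp x) = x" by (simp add: flp_def)
lemma flp_fst[simp]: "fst (flp x) = fst x" by (simp add: flp_def)

lemma cons_red_alt: "cons_red x w = (case w of [] \<Rightarrow> [x] | y # w' \<Rightarrow> if y = flp x then w' else x # w)"
  by (cases x; cases w) (auto simp: flp_def split: if_splits)

lemma reduced_Cons2: "reduced (x # y # w) \<longleftrightarrow> y \<noteq> flp x \<and> reduced (y # w)"
  by (cases x; cases y) (auto simp: flp_def)

lemma reduced_tl: "reduced (x # w) \<Longrightarrow> reduced w"
  by (cases w) (auto simp: reduced_Cons2)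

lemma reduced_cons_red: "reduced w \<Longrightarrow> reduced (cons_red x w)"
  by (cases w) (auto simp: cons_red_alt reduced_Cons2 dest: reduced_tl)

lemma cons_red_flp: "reduced t \<Longrightarrow> cons_red x (cons_red (flp x) t) = t"
proof (cases t)
  case (Cons y t')
  assume r: "reduced t"
  show ?thesis
  proof (cases "y = x")
    case True
    then show ?thesis using Cons r
      by (cases t') (auto simp: cons_red_alt reduced_Cons2)
  next
    case False
    then show ?thesis using Cons by (auto simp: cons_red_alt)
  qed
qed (simp add: cons_red_alt)

lemma reduce_Cons: "reduce (x # w) = cons_red x (reduce w)"
  by (simp add: reduce_def)

lemma reduce_Nil[simp]: "reduce [] = []" by (simp add: reduce_def)

lemma reduced_reduce: "reduced (reduce w)"
  by (induction w) (auto simp: reduce_Cons intro: reduced_cons_red)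

lemma reduce_reduced: "reduced w \<Longrightarrow> reduce w = w"
proof (induction w)
  case (Cons x w)
  then have "reduce w = w" using reduced_tl by blast
  then show ?case using Cons.prems
    by (cases w) (auto simp: reduce_Cons cons_red_alt reduced_Cons2)
qed simp

lemma R_reduced: "reduced z \<Longrightarrow> reduced (foldr cons_red u z)"
  by (induction u) (auto intro: reduced_cons_red)

lemma R_cons_red:
  assumes "reduced w" "reduced z"
  shows "foldr cons_red (cons_red x w) z = cons_red x (foldr cons_red w z)"
proof (cases w)
  case (Cons y w')
  show ?thesis
  proof (cases "y = flp x")
    case True
    have "cons_red x (cons_red (flp x) (foldr cons_red w' z)) = foldr cons_red w' z"
      by (rule cons_red_flp) (rule R_reduced[OF assms(2)])
    then show ?thesis using Cons True by (simp add: cons_red_alt)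
  next
    case False
    then show ?thesis using Cons by (simp add: cons_red_alt)
  qed
qed (simp add: cons_red_alt)

lemma R_reduce: "reduced z \<Longrightarrow> foldr cons_red (reduce u) z = foldr cons_red u z"
  by (induction u) (simp_all add: reduce_Cons R_cons_red reduced_reduce)

lemma reduce_append: "reduce (u @ v) = foldr cons_red u (reduce v)"
  by (simp add: reduce_def)

lemma reduce_assoc: "reduce (reduce (u @ v) @ w) = reduce (u @ reduce (v @ w))"
proof -
  have "reduce (reduce (u @ v) @ w) = foldr cons_red (reduce (u @ v)) (reduce w)"
    by (rule reduce_append)
  also have "\<dots> = foldr cons_red (u @ v) (reduce w)" by (rule R_reduce[OF reduced_reduce])
  also have "\<dots> = foldr cons_red u (reduce (v @ w))" by (simp add: reduce_append)
  also have "\<dots> = foldr cons_red u (reduce (reduce (v @ w)))" by (simp add: reduce_reduced reduced_reduce)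
  also have "\<dots> = reduce (u @ reduce (v @ w))" by (simp add: reduce_append)
  finally show ?thesis .
qed

lemma R_winv: "reduced z \<Longrightarrow> foldr cons_red (winv w) (foldr cons_red w z) = z"
proof (induction w)
  case (Cons x w)
  have "cons_red (flp x) (cons_red (flp (flp x)) (foldr cons_red w z)) = foldr cons_red w z"
    by (rule cons_red_flp) (rule R_reduced[OF Cons.prems])
  then show ?case using Cons by (simp add: winv_def)
qed (simp add: winv_def)

lemma set_cons_red: "set (cons_red x w) \<subseteq> insert x (set w)"
  by (auto simp: cons_red_alt split: list.splits if_splits)

lemma set_R: "set (foldr cons_red u z) \<subseteq> set u \<union> set z"
  by (induction u) (use set_cons_red in fastforce)+

lemma set_reduce: "set (reduce w) \<subseteq> set w"
  using set_R[of w "[]"] by (simp add: reduce_def)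

definition sgn1 :: "nat \<times> bool \<Rightarrow> int" where "sgn1 x = (if snd x then -1 else 1)"

lemma upsilon_alt: "upsilon w = sum_list (map sgn1 w)"
  unfolding upsilon_def sgn1_def by (induction w) auto

lemma upsilon_Nil[simp]: "upsilon [] = 0" by (simp add: upsilon_def)

lemma upsilon_Cons[simp]: "upsilon (x # w) = sgn1 x + upsilon w"
  by (simp add: upsilon_alt)

lemma upsilon_cons_red: "upsilon (cons_red x w) = sgn1 x + upsilon w"
  by (auto simp: upsilon_alt cons_red_alt sgn1_def flp_def split: list.splits if_splits)

lemma upsilon_R: "upsilon (foldr cons_red u z) = upsilon u + upsilon z"
  by (induction u) (simp_all add: upsilon_cons_red)

lemma upsilon_reduce: "upsilon (reduce w) = upsilon w"
  using upsilon_R[of w "[]"] by (simp add: reduce_def upsilon_alt)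

lemma FG_simps[simp]: "carrier (FG m) = {w. reduced w \<and> (\<forall>(i,b) \<in> set w. 1 \<le> i \<and> i \<le> m)}"
  "u \<otimes>\<^bsub>FG m\<^esub> v = reduce (u @ v)" "\<one>\<^bsub>FG m\<^esub> = []"
  by (simp_all add: FG_def)

lemma group_FG: "group (FG m)"
proof (rule groupI)
  fix x y assume "x \<in> carrier (FG m)" "y \<in> carrier (FG m)"
  then show "x \<otimes>\<^bsub>FG m\<^esub> y \<in> carrier (FG m)"
    using set_reduce[of "x @ y"] by (auto simp: reduced_reduce)
next
  fix x y z
  show "x \<otimes>\<^bsub>FG m\<^esub> y \<otimes>\<^bsub>FG m\<^esub> z = x \<otimes>\<^bsub>FG m\<^esub> (y \<otimes>\<^bsub>FG m\<^esub> z)"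
    by (simp add: reduce_assoc)
next
  fix x assume x: "x \<in> carrier (FG m)"
  then show "\<one>\<^bsub>FG m\<^esub> \<otimes>\<^bsub>FG m\<^esub> x = x" by (simp add: reduce_reduced)
  have "reduce (winv x) \<in> carrier (FG m)"
  proof -
    have "\<forall>(i,b) \<in> set (winv x). 1 \<le> i \<and> i \<le> m"
    proof (clarify)
      fix i b assume "(i, b) \<in> set (winv x)"
      then obtain y where "y \<in> set x" "(i,b) = flp y" by (auto simp: winv_def)
      then show "1 \<le> i \<and> i \<le> m" using x by (cases y) (auto simp: flp_def)
    qed
    then show ?thesis using set_reduce[of "winv x"] by (auto simp: reduced_reduce)
  qed
  moreover have "reduce (reduce (winv x) @ x) = []"
  proof -
    have "reduce (reduce (winv x) @ x) = foldr cons_red (reduce (winv x)) (reduce x)"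
      by (rule reduce_append)
    also have "\<dots> = foldr cons_red (winv x) (foldr cons_red x [])"
      by (simp add: R_reduce reduced_reduce) (simp add: reduce_def)
    also have "\<dots> = []" by (rule R_winv) simp
    finally show ?thesis .
  qed
  ultimately show "\<exists>y\<in>carrier (FG m). y \<otimes>\<^bsub>FG m\<^esub> x = \<one>\<^bsub>FG m\<^esub>" by auto
qed simp

lemma upsilon_mult: "upsilon (u \<otimes>\<^bsub>FG m\<^esub> v) = upsilon u + upsilon v"
  by (simp only: FG_simps upsilon_reduce) (simp add: upsilon_alt)

lemma upsilon_one: "upsilon \<one>\<^bsub>FG m\<^esub> = 0" by (simp add: upsilon_alt)


declare FG_simps[simp del]

locale FGctx = fixes m :: nat assumes m1: "1 \<le> m"
begin

sublocale G: group "FG m" by (rule group_FG)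

abbreviation "Gm \<equiv> FG m"
abbreviation "H0 \<equiv> carrier (F0 m)"

lemma z1_carr: "z1 \<in> carrier Gm"
  using m1 by (simp add: z1_def FG_simps)

lemma F0_carrier: "carrier (F0 m) = {w \<in> carrier Gm. upsilon w = 0}"
  by (simp add: F0_def)

lemma F0_mult[simp]: "x \<otimes>\<^bsub>F0 m\<^esub> y = x \<otimes>\<^bsub>Gm\<^esub> y"
  by (simp add: F0_def)

lemma F0_one[simp]: "\<one>\<^bsub>F0 m\<^esub> = \<one>\<^bsub>Gm\<^esub>"
  by (simp add: F0_def)

lemma upsilon_inv: "w \<in> carrier Gm \<Longrightarrow> upsilon (inv\<^bsub>Gm\<^esub> w) = - upsilon w"
proof -
  assume w: "w \<in> carrier Gm"
  have "upsilon (inv\<^bsub>Gm\<^esub> w \<otimes>\<^bsub>Gm\<^esub> w) = 0" using w by (simp add: upsilon_one)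
  then show ?thesis by (simp add: upsilon_mult)
qed

lemma F0_sub: "subgroup H0 Gm"
proof (rule G.subgroupI)
  show "H0 \<subseteq> carrier Gm" by (auto simp: F0_carrier)
  show "H0 \<noteq> {}" using upsilon_one[of m] G.one_closed by (auto simp: F0_carrier)
  show "inv\<^bsub>Gm\<^esub> a \<in> H0" if "a \<in> H0" for a using that by (simp add: F0_carrier upsilon_inv)
  show "a \<otimes>\<^bsub>Gm\<^esub> b \<in> H0" if "a \<in> H0" "b \<in> H0" for a b using that by (simp add: F0_carrier upsilon_mult)
qed

lemma group_F0: "group (F0 m)"
proof -
  have "group (Gm\<lparr>carrier := H0\<rparr>)" using subgroup.subgroup_is_group[OF F0_sub G.is_group] .
  moreover have "Gm\<lparr>carrier := H0\<rparr> = F0 m" unfolding F0_def by simp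
  ultimately show ?thesis by simp
qed

lemma F0_sub_carr: "g \<in> H0 \<Longrightarrow> g \<in> carrier Gm"
  by (simp add: F0_carrier)

lemma upsilon_natpow: "x \<in> carrier Gm \<Longrightarrow> upsilon (x [^]\<^bsub>Gm\<^esub> (n::nat)) = int n * upsilon x"
proof (induction n)
  case 0
  then show ?case by (simp add: upsilon_one)
next
  case (Suc n)
  have "x [^]\<^bsub>Gm\<^esub> Suc n = x [^]\<^bsub>Gm\<^esub> n \<otimes>\<^bsub>Gm\<^esub> x" by (rule nat_pow_Suc)
  then have "upsilon (x [^]\<^bsub>Gm\<^esub> Suc n) = upsilon (x [^]\<^bsub>Gm\<^esub> n) + upsilon x"
    by (simp only: upsilon_mult)
  then show ?case using Suc by (simp add: distrib_right)
qed

lemma upsilon_intpow: "x \<in> carrier Gm \<Longrightarrow> upsilon (x [^]\<^bsub>Gm\<^esub> (n::int)) = n * upsilon x"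
proof (cases "n < 0")
  case True
  assume x: "x \<in> carrier Gm"
  have "x [^]\<^bsub>Gm\<^esub> n = inv\<^bsub>Gm\<^esub> (x [^]\<^bsub>Gm\<^esub> nat (- n))" using True by (subst int_pow_def2) simp
  then have "upsilon (x [^]\<^bsub>Gm\<^esub> n) = - upsilon (x [^]\<^bsub>Gm\<^esub> nat (- n))"
    using x by (simp only: upsilon_inv G.nat_pow_closed)
  then show ?thesis using x True by (simp only: upsilon_natpow) simp
next
  case False
  assume x: "x \<in> carrier Gm"
  have "x [^]\<^bsub>Gm\<^esub> n = x [^]\<^bsub>Gm\<^esub> nat n" using False by (subst int_pow_def2) simp
  then show ?thesis using x False by (simp only: upsilon_natpow) simp
qed

lemma upsilon_z1: "upsilon z1 = 1" by (simp add: z1_def sgn1_def)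

lemma upsilon_zpow: "upsilon (z1 [^]\<^bsub>Gm\<^esub> (n::int)) = n"
  using upsilon_intpow[OF z1_carr, of n] upsilon_z1 by simp

definition cj :: "int \<Rightarrow> fword \<Rightarrow> fword" where
  "cj c g = inv\<^bsub>Gm\<^esub> (z1 [^]\<^bsub>Gm\<^esub> c) \<otimes>\<^bsub>Gm\<^esub> g \<otimes>\<^bsub>Gm\<^esub> (z1 [^]\<^bsub>Gm\<^esub> c)"

lemma zshift_cj: "zshift m c \<alpha> g = \<alpha> (cj c g)"
  by (simp add: zshift_def cj_def)

lemma zpow_carr[simp]: "z1 [^]\<^bsub>Gm\<^esub> (c::int) \<in> carrier Gm"
  by (simp add: z1_carr)

lemma cj_carr: "g \<in> carrier Gm \<Longrightarrow> cj c g \<in> carrier Gm"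
  by (simp add: cj_def)

lemma cj_F0: "g \<in> H0 \<Longrightarrow> cj c g \<in> H0"
  unfolding F0_carrier using cj_carr
  by (auto simp: cj_def upsilon_mult upsilon_inv)

lemma cj_cj: "g \<in> carrier Gm \<Longrightarrow> cj d (cj c g) = cj (c + d) g"
proof -
  assume g: "g \<in> carrier Gm"
  let ?a = "z1 [^]\<^bsub>Gm\<^esub> c" and ?b = "z1 [^]\<^bsub>Gm\<^esub> d"
  have ab: "z1 [^]\<^bsub>Gm\<^esub> (c + d) = ?a \<otimes>\<^bsub>Gm\<^esub> ?b" by (rule G.int_pow_mult[OF z1_carr])
  show ?thesis unfolding cj_def ab
    using g by (simp add: G.inv_mult_group G.m_assoc)
qed

lemma cj_0: "g \<in> carrier Gm \<Longrightarrow> cj 0 g = g"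
  by (simp add: cj_def)

lemma cj_inv_cancel: "g \<in> carrier Gm \<Longrightarrow> cj c (cj (-c) g) = g"
  by (simp add: cj_cj cj_0)

lemma cj_inv_cancel2: "g \<in> carrier Gm \<Longrightarrow> cj (-c) (cj c g) = g"
  by (simp add: cj_cj cj_0)

lemma canc: "x \<in> carrier Gm \<Longrightarrow> y \<in> carrier Gm \<Longrightarrow> x \<otimes>\<^bsub>Gm\<^esub> (inv\<^bsub>Gm\<^esub> x \<otimes>\<^bsub>Gm\<^esub> y) = y"
  by (simp add: G.m_assoc[symmetric])

lemma cj_mult: "g \<in> carrier Gm \<Longrightarrow> h \<in> carrier Gm \<Longrightarrow> cj c (g \<otimes>\<^bsub>Gm\<^esub> h) = cj c g \<otimes>\<^bsub>Gm\<^esub> cj c h"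
  by (simp add: cj_def G.m_assoc canc)

lemma cj_surj: "cj c ` H0 = H0"
proof
  show "cj c ` H0 \<subseteq> H0" using cj_F0 by blast
  show "H0 \<subseteq> cj c ` H0"
  proof
    fix g assume "g \<in> H0"
    then have "g = cj c (cj (-c) g)" "cj (-c) g \<in> H0" using cj_inv_cancel F0_sub_carr cj_F0 by auto
    then show "g \<in> cj c ` H0" by (rule image_eqI)
  qed
qed

lemma zshift_zshift: "g \<in> carrier Gm \<Longrightarrow> zshift m c (zshift m d \<alpha>) g = \<alpha> (cj (c + d) g)"
  by (simp add: zshift_cj cj_cj cj_carr)

end


definition closed_act :: "('g, 'x) monoid_scheme \<Rightarrow> 'b set \<Rightarrow> ('g \<Rightarrow> 'b \<Rightarrow> 'b) \<Rightarrow> bool" where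
  "closed_act G X \<alpha> \<longleftrightarrow> (\<forall>g \<in> carrier G. \<forall>x \<in> X. \<alpha> g x \<in> X)"

lemma iso_refl: "gset_iso G X \<alpha> X \<alpha>"
  unfolding gset_iso_def by (rule exI[of _ id]) auto

lemma iso_sym:
  assumes c: "closed_act G X \<alpha>" and i: "gset_iso G X \<alpha> Y \<beta>"
  shows "gset_iso G Y \<beta> X \<alpha>"
proof -
  obtain f where f: "bij_betw f X Y" and eq: "\<forall>g \<in> carrier G. \<forall>x \<in> X. f (\<alpha> g x) = \<beta> g (f x)"
    using i unfolding gset_iso_def by blast
  let ?f = "inv_into X f"
  have "bij_betw ?f Y X" using f by (rule bij_betw_inv_into)
  moreover have "\<forall>g \<in> carrier G. \<forall>y \<in> Y. ?f (\<beta> g y) = \<alpha> g (?f y)"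
  proof (intro ballI)
    fix g y assume g: "g \<in> carrier G" and y: "y \<in> Y"
    define x where "x = ?f y"
    have x: "x \<in> X" "f x = y" using f y unfolding x_def
      by (auto simp: bij_betw_def intro: inv_into_into f_inv_into_f)
    have "\<beta> g y = f (\<alpha> g x)" using eq g x by auto
    moreover have "\<alpha> g x \<in> X" using c g x unfolding closed_act_def by auto
    ultimately show "?f (\<beta> g y) = \<alpha> g (?f y)"
      using f unfolding x_def[symmetric] by (simp add: bij_betw_def)
  qed
  ultimately show ?thesis unfolding gset_iso_def by blast
qed

lemma iso_trans:
  assumes "gset_iso G X \<alpha> Y \<beta>" "gset_iso G Y \<beta> Z \<gamma>"
  shows "gset_iso G X \<alpha> Z \<gamma>"
proof -
  obtain f where f: "bij_betw f X Y" and ef: "\<forall>g \<in> carrier G. \<forall>x \<in> X. f (\<alpha> g x) = \<beta> g (f x)"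
    using assms(1) unfolding gset_iso_def by blast
  obtain h where h: "bij_betw h Y Z" and eh: "\<forall>g \<in> carrier G. \<forall>x \<in> Y. h (\<beta> g x) = \<gamma> g (h x)"
    using assms(2) unfolding gset_iso_def by blast
  have "bij_betw (h \<circ> f) X Z" using f h by (rule bij_betw_trans)
  moreover have "\<forall>g \<in> carrier G. \<forall>x \<in> X. (h \<circ> f) (\<alpha> g x) = \<gamma> g ((h \<circ> f) x)"
    using ef eh f by (auto simp: bij_betw_def)
  ultimately show ?thesis unfolding gset_iso_def by blast
qed

lemma iso_cong:
  assumes "gset_iso G X \<alpha> Y \<beta>" "\<And>g. g \<in> carrier G \<Longrightarrow> \<alpha> g = \<alpha>' g" "\<And>g. g \<in> carrier G \<Longrightarrow> \<beta> g = \<beta>' g"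
  shows "gset_iso G X \<alpha>' Y \<beta>'"
  using assms unfolding gset_iso_def by auto

lemma group_action_closed: assumes a: "group_action G X \<alpha>" shows "closed_act G X \<alpha>"
  unfolding closed_act_def
proof (intro ballI)
  fix g x assume g: "g \<in> carrier G" and x: "x \<in> X"
  show "\<alpha> g x \<in> X" by (rule group_action.element_image[OF a g x refl])
qed

lemma matching:
  assumes "finite A" "finite B" "card A = card B"
    and "\<forall>X\<in>A. E X X"
    and "\<forall>Y\<in>B. \<forall>X0\<in>A. \<forall>X\<in>A. R Y X0 \<and> E X0 X \<longrightarrow> R Y X"
    and "\<forall>Y\<in>B. \<forall>X0\<in>A. \<forall>X\<in>A. R Y X0 \<and> R Y X \<longrightarrow> E X0 X"
    and "\<forall>X\<in>A. card {X' \<in> A. E X' X} = card {Y \<in> B. R Y X}"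
  shows "\<exists>\<sigma>. bij_betw \<sigma> A B \<and> (\<forall>X\<in>A. R (\<sigma> X) X)"
  using assms
proof (induction A arbitrary: B rule: finite_induct)
  case empty
  have "B = {}" using empty.prems(1,2) by simp
  then show ?case by (simp add: bij_betw_def)
next
  case (insert x F)
  let ?A = "insert x F"
  have "x \<in> {X' \<in> ?A. E X' x}" using insert.prems(3) by auto
  then have "card {X' \<in> ?A. E X' x} > 0" using insert.hyps(1) by (auto simp: card_gt_0_iff)
  then have "card {Y \<in> B. R Y x} > 0" using insert.prems(6) by auto
  then obtain y where y: "y \<in> B" "R y x" by (auto simp: card_gt_0_iff)
  define B' where "B' = B - {y}"
  have fB': "finite B'" using insert.prems(1) by (simp add: B'_def)
  have cB': "card F = card B'" using insert.prems(2) insert.hyps y by (simp add: B'_def)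
  have cnt: "\<forall>X\<in>F. card {X' \<in> F. E X' X} = card {Y \<in> B'. R Y X}"
  proof
    fix X assume X: "X \<in> F"
    have e1: "{X' \<in> F. E X' X} = {X' \<in> ?A. E X' X} - {x}" using insert.hyps by auto
    have e2: "{Y \<in> B'. R Y X} = {Y \<in> B. R Y X} - {y}" by (auto simp: B'_def)
    have fin1: "finite {X' \<in> ?A. E X' X}" using insert.hyps by simp
    have fin2: "finite {Y \<in> B. R Y X}" using insert.prems(1) by simp
    have c0: "card {X' \<in> ?A. E X' X} = card {Y \<in> B. R Y X}" using insert.prems(6) X by auto
    show "card {X' \<in> F. E X' X} = card {Y \<in> B'. R Y X}"
    proof (cases "E x X")
      case True
      then have "R y X" using insert.prems(4)[rule_format, of y x X] y X by simp
      then show ?thesis unfolding e1 e2 using True y c0 fin1 fin2 by (simp add: card_Diff_singleton)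
    next
      case False
      then have "\<not> R y X" using insert.prems(5)[rule_format, of y x X] y X by auto
      then show ?thesis unfolding e1 e2 using False c0 by simp
    qed
  qed
  obtain \<sigma> where s: "bij_betw \<sigma> F B'" "\<forall>X\<in>F. R (\<sigma> X) X"
  proof -
    have h3: "\<forall>X\<in>F. E X X" using insert.prems(3) by blast
    have h4: "\<forall>Y\<in>B'. \<forall>X0\<in>F. \<forall>X\<in>F. R Y X0 \<and> E X0 X \<longrightarrow> R Y X"
      using insert.prems(4) unfolding B'_def by blast
    have h5: "\<forall>Y\<in>B'. \<forall>X0\<in>F. \<forall>X\<in>F. R Y X0 \<and> R Y X \<longrightarrow> E X0 X"
      using insert.prems(5) unfolding B'_def by blast
    show ?thesis using insert.IH[OF fB' cB' h3 h4 h5 cnt] that by blast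
  qed
  define \<sigma>' where "\<sigma>' = \<sigma>(x := y)"
  have "bij_betw \<sigma>' F B' = bij_betw \<sigma> F B'"
    by (rule bij_betw_cong) (use insert.hyps(2) in \<open>auto simp: \<sigma>'_def\<close>)
  then have "bij_betw \<sigma>' F B'" using s(1) by simp
  then have "bij_betw \<sigma>' (F \<union> {x}) (B' \<union> {\<sigma>' x})"
    by (rule notIn_Un_bij_betw[rotated 2]) (use insert.hyps(2) in \<open>auto simp: \<sigma>'_def B'_def\<close>)
  moreover have "B' \<union> {\<sigma>' x} = B" using y by (auto simp: \<sigma>'_def B'_def)
  ultimately have "bij_betw \<sigma>' ?A B" by simp
  moreover have "\<forall>X\<in>?A. R (\<sigma>' X) X" using s(2) y insert.hyps(2) by (auto simp: \<sigma>'_def)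
  ultimately show ?case by blast
qed

lemma glue:
  assumes cov: "\<Union>A = S" and disj: "\<forall>X\<in>A. \<forall>Y\<in>A. X = Y \<or> X \<inter> Y = {}"
    and sig: "bij_betw \<sigma> A A" and f: "\<forall>X\<in>A. bij_betw (f X) X (\<sigma> X)"
    and ob: "\<forall>s\<in>S. ob s \<in> A \<and> s \<in> ob s"
  shows "bij_betw (\<lambda>s. f (ob s) s) S S"
proof -
  have ouniq: "ob s = X" if "X \<in> A" "s \<in> X" for s X
  proof -
    have "s \<in> S" using that cov by auto
    then show ?thesis using ob disj that by blast
  qed
  have inS: "f (ob s) s \<in> \<sigma> (ob s)" if "s \<in> S" for s
    using f ob that by (auto simp: bij_betw_def)
  have sA: "\<sigma> X \<in> A" if "X \<in> A" for X using sig that by (auto simp: bij_betw_def)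
  show ?thesis unfolding bij_betw_def
  proof (intro conjI)
    show "inj_on (\<lambda>s. f (ob s) s) S"
    proof (rule inj_onI)
      fix s s' assume s: "s \<in> S" "s' \<in> S" and eq: "f (ob s) s = f (ob s') s'"
      have "\<sigma> (ob s) \<inter> \<sigma> (ob s') \<noteq> {}" using inS[OF s(1)] inS[OF s(2)] eq by auto
      then have "\<sigma> (ob s) = \<sigma> (ob s')" using disj sA ob s by blast
      then have "ob s = ob s'" using sig ob s by (auto simp: bij_betw_def inj_on_def)
      then show "s = s'" using f ob s eq by (metis bij_betw_def inj_onD)
    qed
    show "(\<lambda>s. f (ob s) s) ` S = S"
    proof
      show "(\<lambda>s. f (ob s) s) ` S \<subseteq> S" using inS ob sA cov by blast
      show "S \<subseteq> (\<lambda>s. f (ob s) s) ` S"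
      proof
        fix y assume y: "y \<in> S"
        then have "ob y \<in> A" using ob by auto
        then obtain X where X: "X \<in> A" "\<sigma> X = ob y" using sig by (metis bij_betw_def imageE)
        then have "y \<in> f X ` X" using f ob y by (auto simp: bij_betw_def)
        then obtain s where s: "s \<in> X" "y = f X s" by auto
        have "ob s = X" using ouniq X s by auto
        moreover have "s \<in> S" using X s cov by auto
        ultimately show "y \<in> (\<lambda>s. f (ob s) s) ` S" using s by force
      qed
    qed
  qed
qed


lemma orbit_image: "orbit G \<phi> s = (\<lambda>g. \<phi> g s) ` carrier G"
  unfolding orbit_def by blast

lemma orbits_image: "orbits G S \<phi> = (\<lambda>s. orbit G \<phi> s) ` S"
  unfolding orbits_def by blast

lemma orbit_subset: "group_action G S \<phi> \<Longrightarrow> s \<in> S \<Longrightarrow> orbit G \<phi> s \<subseteq> S"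
  using group_action_closed[of G S \<phi>] unfolding closed_act_def orbit_image by blast

lemma orbit_transport:
  assumes ga: "group_action G S \<phi>" and T: "bij_betw T S S"
    and eq: "\<forall>g\<in>carrier G. \<forall>s\<in>S. T (\<phi> g s) = \<phi>' g (T s)"
  shows "bij_betw (image T) (orbits G S \<phi>) (orbits G S \<phi>')"
    and "\<forall>X\<in>orbits G S \<phi>. gset_iso G X (restr_act \<phi> X) (T ` X) (restr_act \<phi>' (T ` X))"
proof -
  have oi: "T ` orbit G \<phi> s = orbit G \<phi>' (T s)" if s: "s \<in> S" for s
  proof -
    have "T ` orbit G \<phi> s = (\<lambda>g. T (\<phi> g s)) ` carrier G" unfolding orbit_image by (simp add: image_image)
    also have "\<dots> = (\<lambda>g. \<phi>' g (T s)) ` carrier G" using eq s by (intro image_cong) auto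
    finally show ?thesis unfolding orbit_image .
  qed
  have TS: "T ` S = S" using T by (simp add: bij_betw_def)
  have "orbits G S \<phi>' = (\<lambda>y. orbit G \<phi>' y) ` (T ` S)" unfolding orbits_image TS ..
  also have "\<dots> = (\<lambda>s. T ` orbit G \<phi> s) ` S" unfolding image_image using oi by (intro image_cong) auto
  also have "\<dots> = image T ` orbits G S \<phi>" unfolding orbits_image image_image ..
  finally have img: "image T ` orbits G S \<phi> = orbits G S \<phi>'" by simp
  have sub: "orbits G S \<phi> \<subseteq> Pow S" unfolding orbits_image using orbit_subset[OF ga] by blast
  have "inj_on (image T) (Pow S)" using T by (intro inj_on_image_Pow) (simp add: bij_betw_def)
  then have "inj_on (image T) (orbits G S \<phi>)" using sub by (rule inj_on_subset)
  then show "bij_betw (image T) (orbits G S \<phi>) (orbits G S \<phi>')" using img by (simp add: bij_betw_def)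
  show "\<forall>X\<in>orbits G S \<phi>. gset_iso G X (restr_act \<phi> X) (T ` X) (restr_act \<phi>' (T ` X))"
  proof
    fix X assume X: "X \<in> orbits G S \<phi>"
    then have XS: "X \<subseteq> S" using sub by blast
    have "inj_on T X" using T XS by (meson bij_betw_def inj_on_subset)
    then have "bij_betw T X (T ` X)" by (simp add: bij_betw_imageI)
    moreover have "\<forall>g\<in>carrier G. \<forall>x\<in>X. T (restr_act \<phi> X g x) = restr_act \<phi>' (T ` X) g (T x)"
    proof (intro ballI)
      fix g x assume g: "g \<in> carrier G" and x: "x \<in> X"
      have "T (\<phi> g x) = \<phi>' g (T x)" using eq g x XS by blast
      then show "T (restr_act \<phi> X g x) = restr_act \<phi>' (T ` X) g (T x)"
        using x by (simp add: restr_act_def)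
    qed
    ultimately show "gset_iso G X (restr_act \<phi> X) (T ` X) (restr_act \<phi>' (T ` X))"
      unfolding gset_iso_def by blast
  qed
qed

lemma transport_action:
  assumes ga: "group_action G X \<alpha>" and e: "bij_betw e X Y"
    and bdef: "\<beta> = (\<lambda>g. \<lambda>y\<in>Y. e (\<alpha> g (inv_into X e y)))"
  shows "group_action G Y \<beta>" and "gset_iso G X \<alpha> Y \<beta>"
    and "transitive_action G X \<alpha> \<Longrightarrow> transitive_action G Y \<beta>"
proof -
  have grp: "group G" using ga by (simp add: group_action_def group_hom_def)
  let ?i = "inv_into X e"
  have i: "bij_betw ?i Y X" using e by (rule bij_betw_inv_into)
  have ie: "?i (e x) = x" if "x \<in> X" for x using e that by (simp add: bij_betw_def)
  have iY: "?i y \<in> X" if "y \<in> Y" for y using i that by (simp add: bij_betw_def image_iff) (use i that bij_betwE in blast)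
  have eX: "e x \<in> Y" if "x \<in> X" for x using e that bij_betwE by blast
  have aX: "\<alpha> g x \<in> X" if "g \<in> carrier G" "x \<in> X" for g x
    using group_action_closed[OF ga] that unfolding closed_act_def by blast
  have bij: "\<beta> g \<in> Bij Y" if g: "g \<in> carrier G" for g
  proof -
    have ab: "bij_betw (\<alpha> g) X X" using group_action.bij_prop0[OF ga g] by (simp add: Bij_def)
    have "bij_betw (e \<circ> \<alpha> g \<circ> ?i) Y Y" using i ab e by (intro bij_betw_trans)
    moreover have "bij_betw (\<beta> g) Y Y = bij_betw (e \<circ> \<alpha> g \<circ> ?i) Y Y"
      by (rule bij_betw_cong) (simp add: bdef)
    ultimately have "bij_betw (\<beta> g) Y Y" by simp
    moreover have "\<beta> g \<in> extensional Y" by (simp add: bdef)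
    ultimately show ?thesis by (simp add: Bij_def)
  qed
  have mult: "\<beta> (g \<otimes>\<^bsub>G\<^esub> h) = \<beta> g \<otimes>\<^bsub>BijGroup Y\<^esub> \<beta> h" if g: "g \<in> carrier G" and h: "h \<in> carrier G" for g h
  proof -
    have "\<beta> g \<otimes>\<^bsub>BijGroup Y\<^esub> \<beta> h = compose Y (\<beta> g) (\<beta> h)"
      using bij[OF g] bij[OF h] by (simp add: BijGroup_def)
    also have "\<dots> = \<beta> (g \<otimes>\<^bsub>G\<^esub> h)"
    proof (rule ext)
      fix y show "compose Y (\<beta> g) (\<beta> h) y = \<beta> (g \<otimes>\<^bsub>G\<^esub> h) y"
      proof (cases "y \<in> Y")
        case True
        have x: "?i y \<in> X" using iY[OF True] .
        have ax: "\<alpha> h (?i y) \<in> X" using aX[OF h x] .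
        have bh: "\<beta> h y = e (\<alpha> h (?i y))" using True by (simp add: bdef)
        have bhY: "\<beta> h y \<in> Y" using bh eX[OF ax] by simp
        have "\<beta> g (\<beta> h y) = e (\<alpha> g (?i (\<beta> h y)))" using bhY by (simp add: bdef)
        also have "\<dots> = e (\<alpha> g (\<alpha> h (?i y)))" using bh ie[OF ax] by simp
        also have "\<dots> = e (\<alpha> (g \<otimes>\<^bsub>G\<^esub> h) (?i y))"
          using group_action.composition_rule[OF ga x g h] by simp
        also have "\<dots> = \<beta> (g \<otimes>\<^bsub>G\<^esub> h) y" using True by (simp add: bdef)
        finally show ?thesis using True by (simp add: compose_def)
      next
        case False
        then show ?thesis by (simp add: compose_def bdef)
      qed
    qed
    finally show ?thesis by simp
  qed
  show "group_action G Y \<beta>"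
    unfolding group_action_def group_hom_def group_hom_axioms_def hom_def
    using grp group_BijGroup bij mult by (auto simp: BijGroup_def)
  have eqv: "e (\<alpha> g x) = \<beta> g (e x)" if "g \<in> carrier G" "x \<in> X" for g x
    using that eX ie by (simp add: bdef)
  show "gset_iso G X \<alpha> Y \<beta>" unfolding gset_iso_def using e eqv by blast
  assume ta: "transitive_action G X \<alpha>"
  show "transitive_action G Y \<beta>"
    unfolding transitive_action_def transitive_action_axioms_def
  proof (intro conjI ballI allI impI)
    show "group_action G Y \<beta>" by fact
    fix y1 y2 assume y: "y1 \<in> Y" "y2 \<in> Y"
    obtain g where g: "g \<in> carrier G" "\<alpha> g (?i y1) = ?i y2"
      using transitive_action.unique_orbit[OF ta iY[OF y(1)] iY[OF y(2)]] by blast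
    have "\<beta> g y1 = e (?i y2)" using y g by (simp add: bdef)
    also have "\<dots> = y2" using e y by (simp add: bij_betw_def f_inv_into_f)
    finally show "\<exists>g\<in>carrier G. \<beta> g y1 = y2" using g by blast
  qed
qed

context FGctx begin

lemma iso_shift:
  assumes "gset_iso (F0 m) X \<alpha> Y \<beta>"
  shows "gset_iso (F0 m) X (zshift m c \<alpha>) Y (zshift m c \<beta>)"
proof -
  obtain f where f: "bij_betw f X Y" and e: "\<forall>g\<in>H0. \<forall>x\<in>X. f (\<alpha> g x) = \<beta> g (f x)"
    using assms unfolding gset_iso_def by blast
  have "\<forall>g\<in>H0. \<forall>x\<in>X. f (zshift m c \<alpha> g x) = zshift m c \<beta> g (f x)"
  proof (intro ballI)
    fix g x assume g: "g \<in> H0" and x: "x \<in> X"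
    have "cj c g \<in> H0" using g by (rule cj_F0)
    then show "f (zshift m c \<alpha> g x) = zshift m c \<beta> g (f x)" unfolding zshift_cj using e x by blast
  qed
  then show ?thesis using f unfolding gset_iso_def by blast
qed

lemma iso_unshift:
  assumes "gset_iso (F0 m) X (zshift m c \<alpha>) Y (zshift m c \<beta>)"
  shows "gset_iso (F0 m) X \<alpha> Y \<beta>"
proof -
  have "gset_iso (F0 m) X (zshift m (-c) (zshift m c \<alpha>)) Y (zshift m (-c) (zshift m c \<beta>))"
    by (rule iso_shift[OF assms])
  then show ?thesis
  proof (rule iso_cong)
    fix g assume "g \<in> H0"
    then have g: "g \<in> carrier Gm" by (rule F0_sub_carr)
    show "zshift m (-c) (zshift m c \<alpha>) g = \<alpha> g" using g by (simp add: zshift_zshift cj_0)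
    show "zshift m (-c) (zshift m c \<beta>) g = \<beta> g" using g by (simp add: zshift_zshift cj_0)
  qed
qed

lemma closed_shift: "closed_act (F0 m) X \<alpha> \<Longrightarrow> closed_act (F0 m) X (zshift m c \<alpha>)"
  unfolding closed_act_def zshift_cj using cj_F0 by blast

lemma orbit_shift: "orbit (F0 m) (zshift m c \<phi>) x = orbit (F0 m) \<phi> x"
proof -
  have "orbit (F0 m) (zshift m c \<phi>) x = (\<lambda>g. \<phi> g x) ` (cj c ` H0)"
    unfolding orbit_image zshift_cj image_image ..
  then show ?thesis unfolding cj_surj orbit_image .
qed

lemma orbits_shift: "orbits (F0 m) S (zshift m c \<phi>) = orbits (F0 m) S \<phi>"
  unfolding orbits_def orbit_shift ..

lemma restr_zshift: "restr_act (zshift m c \<phi>) X = zshift m c (restr_act \<phi> X)"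
  by (simp add: restr_act_def zshift_def restrict_def)

lemma nat_copy:
  assumes sft: "strongly_finite_transitive m X \<alpha>"
  shows "\<exists>(Ob::nat set) \<tau>. strongly_finite_transitive m Ob \<tau> \<and> gset_iso (F0 m) X \<alpha> Ob \<tau>"
proof -
  have ta: "transitive_action (F0 m) X \<alpha>" and ne: "X \<noteq> {}" and fin: "finite X"
    and k: "\<exists>k::int. k > 0 \<and> gset_iso (F0 m) X (zshift m k \<alpha>) X \<alpha>"
    using sft unfolding strongly_finite_transitive_def by auto
  have ga: "group_action (F0 m) X \<alpha>" using ta by (simp add: transitive_action_def)
  obtain e where e: "bij_betw e X {0..<card X}" using ex_bij_betw_finite_nat[OF fin] by blast
  define Ob where "Ob = {0..<card X}"
  define \<tau> where "\<tau> = (\<lambda>g. \<lambda>y\<in>Ob. e (\<alpha> g (inv_into X e y)))"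
  have e': "bij_betw e X Ob" using e by (simp add: Ob_def)
  note tr = transport_action[OF ga e' \<tau>_def]
  have gaO: "group_action (F0 m) Ob \<tau>" by (rule tr(1))
  have iso: "gset_iso (F0 m) X \<alpha> Ob \<tau>" by (rule tr(2))
  have taO: "transitive_action (F0 m) Ob \<tau>" by (rule tr(3)[OF ta])
  have neO: "Ob \<noteq> {}" using ne fin by (simp add: Ob_def)
  obtain k :: int where k0: "k > 0" and ik: "gset_iso (F0 m) X (zshift m k \<alpha>) X \<alpha>" using k by blast
  have "gset_iso (F0 m) Ob (zshift m k \<tau>) X (zshift m k \<alpha>)"
    by (rule iso_sym[OF closed_shift[OF group_action_closed[OF ga]] iso_shift[OF iso]])
  then have "gset_iso (F0 m) Ob (zshift m k \<tau>) Ob \<tau>"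
    using ik iso by (blast intro: iso_trans)
  then have "strongly_finite_transitive m Ob \<tau>"
    unfolding strongly_finite_transitive_def using taO neO k0 by (auto simp: Ob_def)
  then show ?thesis using iso by blast
qed

end


lemma card_bij_filter:
  assumes "bij_betw h A A" shows "card {X \<in> A. Q (h X)} = card {Y \<in> A. Q Y}"
proof -
  have "h ` {X \<in> A. Q (h X)} = {Y \<in> A. Q Y}" using assms by (auto simp: bij_betw_def)
  moreover have "inj_on h {X \<in> A. Q (h X)}" using assms by (auto simp: bij_betw_def intro: inj_on_subset)
  ultimately show ?thesis by (metis card_image)
qed

context FGctx begin

lemma fwd:
  assumes ga: "group_action (F0 m) S \<phi>"
    and sft: "\<forall>X \<in> orbits (F0 m) S \<phi>. strongly_finite_transitive m X (restr_act \<phi> X)"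
    and gp: "group_action (FG m) S \<psi>" and ext: "\<forall>g \<in> carrier (F0 m). \<psi> g = \<phi> g"
  shows "\<forall>(Orb :: nat set) \<tau>. strongly_finite_transitive m Orb \<tau> \<longrightarrow>
            multiplicity_in m S \<phi> Orb \<tau> = multiplicity_in m S \<phi> Orb (zshift m 1 \<tau>)"
proof (intro allI impI)
  fix Orb :: "nat set" and \<tau>
  assume so: "strongly_finite_transitive m Orb \<tau>"
  let ?A = "orbits (F0 m) S \<phi>"
  let ?z = "inv\<^bsub>Gm\<^esub> z1"
  have zc: "?z \<in> carrier Gm" using z1_carr by simp
  define T where "T = \<psi> ?z"
  have TB: "T \<in> Bij S" unfolding T_def using group_action.bij_prop0[OF gp zc] .
  then have T: "bij_betw T S S" by (simp add: Bij_def)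
  have eq: "\<forall>g\<in>carrier (F0 m). \<forall>s\<in>S. T (\<phi> g s) = zshift m 1 \<phi> g (T s)"
  proof (intro ballI)
    fix g s assume g: "g \<in> carrier (F0 m)" and s: "s \<in> S"
    have gc: "g \<in> carrier Gm" using g by (rule F0_sub_carr)
    have cg: "cj 1 g \<in> carrier (F0 m)" using g by (rule cj_F0)
    have cgc: "cj 1 g \<in> carrier Gm" using cg by (rule F0_sub_carr)
    have "T (\<phi> g s) = \<psi> ?z (\<psi> g s)" using ext g by (simp add: T_def)
    also have "\<dots> = \<psi> (?z \<otimes>\<^bsub>Gm\<^esub> g) s"
      using group_action.composition_rule[OF gp s zc gc] by simp
    also have "?z \<otimes>\<^bsub>Gm\<^esub> g = cj 1 g \<otimes>\<^bsub>Gm\<^esub> ?z"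
      unfolding cj_def using z1_carr gc by (simp add: G.m_assoc)
    also have "\<psi> (cj 1 g \<otimes>\<^bsub>Gm\<^esub> ?z) s = \<psi> (cj 1 g) (\<psi> ?z s)"
      using group_action.composition_rule[OF gp s cgc zc] by simp
    also have "\<dots> = zshift m 1 \<phi> g (T s)" using ext cg by (simp add: T_def zshift_cj)
    finally show "T (\<phi> g s) = zshift m 1 \<phi> g (T s)" .
  qed
  note ot = orbit_transport[OF ga T eq, unfolded orbits_shift]
  have clA: "closed_act (F0 m) X (restr_act \<phi> X)" if "X \<in> ?A" for X
    using sft that unfolding strongly_finite_transitive_def transitive_action_def
    by (blast intro: group_action_closed)
  have key: "gset_iso (F0 m) X (restr_act \<phi> X) Orb (zshift m 1 \<tau>) \<longleftrightarrow>
             gset_iso (F0 m) (T ` X) (restr_act \<phi> (T ` X)) Orb \<tau>" if X: "X \<in> ?A" for X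
  proof -
    have iY: "gset_iso (F0 m) X (restr_act \<phi> X) (T ` X) (zshift m 1 (restr_act \<phi> (T ` X)))"
      using ot(2) X by (simp add: restr_zshift)
    show ?thesis
    proof
      assume a: "gset_iso (F0 m) X (restr_act \<phi> X) Orb (zshift m 1 \<tau>)"
      have "gset_iso (F0 m) (T ` X) (zshift m 1 (restr_act \<phi> (T ` X))) X (restr_act \<phi> X)"
        by (rule iso_sym[OF clA[OF X] iY])
      then have "gset_iso (F0 m) (T ` X) (zshift m 1 (restr_act \<phi> (T ` X))) Orb (zshift m 1 \<tau>)"
        using a by (rule iso_trans)
      then show "gset_iso (F0 m) (T ` X) (restr_act \<phi> (T ` X)) Orb \<tau>" by (rule iso_unshift)
    next
      assume a: "gset_iso (F0 m) (T ` X) (restr_act \<phi> (T ` X)) Orb \<tau>"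
      show "gset_iso (F0 m) X (restr_act \<phi> X) Orb (zshift m 1 \<tau>)"
        using iY iso_shift[OF a] by (rule iso_trans)
    qed
  qed
  have "multiplicity_in m S \<phi> Orb (zshift m 1 \<tau>) =
        card {X \<in> ?A. gset_iso (F0 m) (T ` X) (restr_act \<phi> (T ` X)) Orb \<tau>}"
    unfolding multiplicity_in_def using key by (intro arg_cong[where f=card]) blast
  also have "\<dots> = multiplicity_in m S \<phi> Orb \<tau>"
    unfolding multiplicity_in_def by (rule card_bij_filter[OF ot(1)])
  finally show "multiplicity_in m S \<phi> Orb \<tau> = multiplicity_in m S \<phi> Orb (zshift m 1 \<tau>)" by simp
qed

end


context FGctx begin

lemma bwd_T:
  assumes ga: "group_action (F0 m) S \<phi>" and fin: "finite S"
    and sft: "\<forall>X \<in> orbits (F0 m) S \<phi>. strongly_finite_transitive m X (restr_act \<phi> X)"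
    and hyp: "\<forall>(Orb :: nat set) \<tau>. strongly_finite_transitive m Orb \<tau> \<longrightarrow>
            multiplicity_in m S \<phi> Orb \<tau> = multiplicity_in m S \<phi> Orb (zshift m 1 \<tau>)"
  shows "\<exists>T. bij_betw T S S \<and> (\<forall>g\<in>H0. \<forall>s\<in>S. T (\<phi> (cj 1 g) s) = \<phi> g (T s))"
proof -
  let ?A = "orbits (F0 m) S \<phi>"
  let ?ra = "restr_act \<phi>"
  define E where "E = (\<lambda>X' X. gset_iso (F0 m) X' (?ra X') X (?ra X))"
  define R where "R = (\<lambda>Y X. gset_iso (F0 m) X (zshift m 1 (?ra X)) Y (?ra Y))"
  have clA: "closed_act (F0 m) X (?ra X)" if "X \<in> ?A" for X
    using sft that unfolding strongly_finite_transitive_def transitive_action_def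
    by (blast intro: group_action_closed)
  have finA: "finite ?A" unfolding orbits_image using fin by simp
  have rfl: "\<forall>X\<in>?A. E X X" unfolding E_def by (simp add: iso_refl)
  have a: "\<forall>Y\<in>?A. \<forall>X0\<in>?A. \<forall>X\<in>?A. R Y X0 \<and> E X0 X \<longrightarrow> R Y X"
  proof (intro ballI impI)
    fix Y X0 X assume m: "Y \<in> ?A" "X0 \<in> ?A" "X \<in> ?A" and r: "R Y X0 \<and> E X0 X"
    have "gset_iso (F0 m) X0 (zshift m 1 (?ra X0)) X (zshift m 1 (?ra X))"
      using r by (simp add: E_def iso_shift)
    then have "gset_iso (F0 m) X (zshift m 1 (?ra X)) X0 (zshift m 1 (?ra X0))"
      by (rule iso_sym[OF closed_shift[OF clA[OF m(2)]]])
    then show "R Y X" using r unfolding R_def by (blast intro: iso_trans)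
  qed
  have b: "\<forall>Y\<in>?A. \<forall>X0\<in>?A. \<forall>X\<in>?A. R Y X0 \<and> R Y X \<longrightarrow> E X0 X"
  proof (intro ballI impI)
    fix Y X0 X assume m: "Y \<in> ?A" "X0 \<in> ?A" "X \<in> ?A" and r: "R Y X0 \<and> R Y X"
    have "gset_iso (F0 m) Y (?ra Y) X (zshift m 1 (?ra X))"
      using r unfolding R_def by (blast intro: iso_sym[OF closed_shift[OF clA[OF m(3)]]])
    then have "gset_iso (F0 m) X0 (zshift m 1 (?ra X0)) X (zshift m 1 (?ra X))"
      using r unfolding R_def by (blast intro: iso_trans)
    then show "E X0 X" unfolding E_def by (rule iso_unshift)
  qed
  have cnt: "\<forall>X\<in>?A. card {X' \<in> ?A. E X' X} = card {Y \<in> ?A. R Y X}"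
  proof
    fix X assume X: "X \<in> ?A"
    obtain Ob :: "nat set" and \<tau> where so: "strongly_finite_transitive m Ob \<tau>"
      and i: "gset_iso (F0 m) X (?ra X) Ob \<tau>"
      using nat_copy sft X by blast
    have h: "multiplicity_in m S \<phi> Ob \<tau> = multiplicity_in m S \<phi> Ob (zshift m 1 \<tau>)"
      using hyp so by blast
    have isy: "gset_iso (F0 m) Ob \<tau> X (?ra X)" by (rule iso_sym[OF clA[OF X] i])
    have iz: "gset_iso (F0 m) X (zshift m 1 (?ra X)) Ob (zshift m 1 \<tau>)" by (rule iso_shift[OF i])
    have s1: "{X' \<in> ?A. E X' X} = {X' \<in> ?A. gset_iso (F0 m) X' (?ra X') Ob \<tau>}"
    proof (rule Collect_cong, rule conj_cong[OF refl])
      fix X' show "E X' X = gset_iso (F0 m) X' (?ra X') Ob \<tau>"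
        unfolding E_def using i isy by (blast intro: iso_trans)
    qed
    have s2: "{Y \<in> ?A. R Y X} = {Y \<in> ?A. gset_iso (F0 m) Y (?ra Y) Ob (zshift m 1 \<tau>)}"
    proof (rule Collect_cong, rule conj_cong[OF refl])
      fix Y assume Y: "Y \<in> ?A"
      show "R Y X = gset_iso (F0 m) Y (?ra Y) Ob (zshift m 1 \<tau>)"
      proof
        assume "R Y X"
        then have "gset_iso (F0 m) Y (?ra Y) X (zshift m 1 (?ra X))"
          unfolding R_def by (rule iso_sym[OF closed_shift[OF clA[OF X]]])
        then show "gset_iso (F0 m) Y (?ra Y) Ob (zshift m 1 \<tau>)" using iz by (rule iso_trans)
      next
        assume "gset_iso (F0 m) Y (?ra Y) Ob (zshift m 1 \<tau>)"
        then have "gset_iso (F0 m) Ob (zshift m 1 \<tau>) Y (?ra Y)" by (rule iso_sym[OF clA[OF Y]])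
        then show "R Y X" unfolding R_def using iz by (blast intro: iso_trans)
      qed
    qed
    show "card {X' \<in> ?A. E X' X} = card {Y \<in> ?A. R Y X}"
      unfolding s1 s2 using h by (simp add: multiplicity_in_def)
  qed
  obtain \<sigma> where sig: "bij_betw \<sigma> ?A ?A" and sR: "\<forall>X\<in>?A. R (\<sigma> X) X"
    using matching[OF finA finA HOL.refl rfl a b cnt] by blast
  define f where "f = (\<lambda>X. SOME f. bij_betw f X (\<sigma> X) \<and>
     (\<forall>g\<in>H0. \<forall>x\<in>X. f (zshift m 1 (?ra X) g x) = ?ra (\<sigma> X) g (f x)))"
  have fX: "bij_betw (f X) X (\<sigma> X) \<and>
     (\<forall>g\<in>H0. \<forall>x\<in>X. f X (zshift m 1 (?ra X) g x) = ?ra (\<sigma> X) g (f X x))" if X: "X \<in> ?A" for X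
  proof -
    have "\<exists>f. bij_betw f X (\<sigma> X) \<and>
     (\<forall>g\<in>H0. \<forall>x\<in>X. f (zshift m 1 (?ra X) g x) = ?ra (\<sigma> X) g (f x))"
      using sR X unfolding R_def gset_iso_def by blast
    then show ?thesis unfolding f_def by (rule someI_ex)
  qed
  define ob where "ob = (\<lambda>s. orbit (F0 m) \<phi> s)"
  have obA: "ob s \<in> ?A \<and> s \<in> ob s" if "s \<in> S" for s
    using that group_action.orbit_refl[OF ga that] unfolding ob_def orbits_def by blast
  have cov: "\<Union>?A = S" by (rule group_action.orbits_coverture[OF ga])
  have disj: "\<forall>X\<in>?A. \<forall>Y\<in>?A. X = Y \<or> X \<inter> Y = {}"
    using group_action.disjoint_union[OF ga] by blast
  have Tb: "bij_betw (\<lambda>s. f (ob s) s) S S"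
    by (rule glue[OF cov disj sig]) (use fX obA in auto)
  have Teq: "\<forall>g\<in>H0. \<forall>s\<in>S. f (ob (\<phi> (cj 1 g) s)) (\<phi> (cj 1 g) s) = \<phi> g (f (ob s) s)"
  proof (intro ballI)
    fix g s assume g: "g \<in> H0" and s: "s \<in> S"
    have cg: "cj 1 g \<in> H0" using g by (rule cj_F0)
    let ?s' = "\<phi> (cj 1 g) s"
    have s'X: "?s' \<in> ob s" unfolding ob_def orbit_def using cg by blast
    have s'S: "?s' \<in> S" using s'X obA[OF s] cov by blast
    have "ob ?s' \<inter> ob s \<noteq> {}" using s'X obA[OF s'S] by blast
    then have oe: "ob ?s' = ob s" using disj obA[OF s'S] obA[OF s] by blast
    have "f (ob s) (zshift m 1 (?ra (ob s)) g s) = ?ra (\<sigma> (ob s)) g (f (ob s) s)"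
      using fX[of "ob s"] obA[OF s] g by blast
    moreover have "zshift m 1 (?ra (ob s)) g s = ?s'"
      using obA[OF s] by (simp add: zshift_cj restr_act_def)
    moreover have "f (ob s) s \<in> \<sigma> (ob s)" using fX[of "ob s"] obA[OF s] by (auto simp: bij_betw_def)
    ultimately show "f (ob ?s') ?s' = \<phi> g (f (ob s) s)" unfolding oe by (simp add: restr_act_def)
  qed
  show ?thesis using Tb Teq by blast
qed

end


lemma (in group) cancel_l1: "x \<in> carrier G \<Longrightarrow> y \<in> carrier G \<Longrightarrow> inv x \<otimes> (x \<otimes> y) = y"
  by (simp add: m_assoc[symmetric])

lemma (in group) cancel_l2: "x \<in> carrier G \<Longrightarrow> y \<in> carrier G \<Longrightarrow> x \<otimes> (inv x \<otimes> y) = y"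
  by (simp add: m_assoc[symmetric])

context FGctx begin

lemma extend:
  assumes ga: "group_action (F0 m) S \<phi>"
    and T: "bij_betw T S S" and Teq: "\<forall>g\<in>H0. \<forall>s\<in>S. T (\<phi> (cj 1 g) s) = \<phi> g (T s)"
  shows "\<exists>\<psi>. group_action (FG m) S \<psi> \<and> (\<forall>g \<in> carrier (F0 m). \<psi> g = \<phi> g)"
proof -
  let ?B = "BijGroup S"
  interpret B: group ?B by (rule group_BijGroup)
  have hom: "\<phi> \<in> hom (F0 m) ?B"
    using ga by (simp add: group_action_def group_hom_def group_hom_axioms_def)
  have phB: "\<phi> g \<in> carrier ?B" if "g \<in> H0" for g using hom that by (auto simp: hom_def)
  have phM: "\<phi> (g \<otimes>\<^bsub>Gm\<^esub> h) = \<phi> g \<otimes>\<^bsub>?B\<^esub> \<phi> h" if "g \<in> H0" "h \<in> H0" for g h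
    using hom that by (auto simp: hom_def)
  have compB: "f \<otimes>\<^bsub>?B\<^esub> g = compose S f g" if "f \<in> carrier ?B" "g \<in> carrier ?B" for f g
    using that by (simp add: BijGroup_def)
  define t where "t = restrict T S"
  have tB: "t \<in> carrier ?B"
  proof -
    have "bij_betw t S S = bij_betw T S S" unfolding t_def by (rule bij_betw_cong) simp
    then show ?thesis using T by (simp add: BijGroup_def Bij_def t_def)
  qed
  have key1: "t \<otimes>\<^bsub>?B\<^esub> \<phi> h = \<phi> (cj (-1) h) \<otimes>\<^bsub>?B\<^esub> t" if h: "h \<in> H0" for h
  proof -
    have ch: "cj (-1) h \<in> H0" using h by (rule cj_F0)
    have "compose S t (\<phi> h) = compose S (\<phi> (cj (-1) h)) t"
    proof (rule ext)
      fix x show "compose S t (\<phi> h) x = compose S (\<phi> (cj (-1) h)) t x"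
      proof (cases "x \<in> S")
        case True
        have "\<phi> h x \<in> S" using phB[OF h] True by (auto simp: BijGroup_def Bij_def bij_betw_def)
        then have "compose S t (\<phi> h) x = T (\<phi> h x)" using True by (simp add: compose_def t_def)
        also have "T (\<phi> h x) = \<phi> (cj (-1) h) (T x)"
        proof -
          have "cj 1 (cj (-1) h) = h" using cj_inv_cancel[of h 1] F0_sub_carr[OF h] by simp
          moreover have "T (\<phi> (cj 1 (cj (-1) h)) x) = \<phi> (cj (-1) h) (T x)" using Teq ch True by blast
          ultimately show ?thesis by simp
        qed
        also have "\<dots> = compose S (\<phi> (cj (-1) h)) t x" using True by (simp add: compose_def t_def)
        finally show ?thesis .
      next
        case False
        then show ?thesis by (simp add: compose_def)
      qed
    qed
    then show ?thesis using compB tB phB h ch by simp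
  qed
  have key2: "inv\<^bsub>?B\<^esub> t \<otimes>\<^bsub>?B\<^esub> \<phi> h = \<phi> (cj 1 h) \<otimes>\<^bsub>?B\<^esub> inv\<^bsub>?B\<^esub> t" if h: "h \<in> H0" for h
  proof -
    have ch: "cj 1 h \<in> H0" using h by (rule cj_F0)
    have k: "t \<otimes>\<^bsub>?B\<^esub> \<phi> (cj 1 h) = \<phi> h \<otimes>\<^bsub>?B\<^esub> t"
      using key1[OF ch] cj_inv_cancel2[of h 1] F0_sub_carr[OF h] by simp
    have "\<phi> (cj 1 h) \<otimes>\<^bsub>?B\<^esub> inv\<^bsub>?B\<^esub> t = inv\<^bsub>?B\<^esub> t \<otimes>\<^bsub>?B\<^esub> ((t \<otimes>\<^bsub>?B\<^esub> \<phi> (cj 1 h)) \<otimes>\<^bsub>?B\<^esub> inv\<^bsub>?B\<^esub> t)"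
      using tB phB[OF ch] by (simp add: B.m_assoc B.cancel_l1)
    also have "\<dots> = inv\<^bsub>?B\<^esub> t \<otimes>\<^bsub>?B\<^esub> ((\<phi> h \<otimes>\<^bsub>?B\<^esub> t) \<otimes>\<^bsub>?B\<^esub> inv\<^bsub>?B\<^esub> t)" by (simp only: k)
    also have "\<dots> = inv\<^bsub>?B\<^esub> t \<otimes>\<^bsub>?B\<^esub> \<phi> h"
      using tB phB[OF h] by (simp add: B.m_assoc)
    finally show ?thesis by simp
  qed
  have tm1: "t [^]\<^bsub>?B\<^esub> (-1::int) = inv\<^bsub>?B\<^esub> t" using tB by (simp add: B.int_pow_neg)
  have keyN: "\<forall>h\<in>H0. t [^]\<^bsub>?B\<^esub> a \<otimes>\<^bsub>?B\<^esub> \<phi> h = \<phi> (cj (-a) h) \<otimes>\<^bsub>?B\<^esub> t [^]\<^bsub>?B\<^esub> a" for a :: int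
  proof (induction a rule: int_induct[where k=0])
    case base
    show ?case using phB by (auto simp: cj_0 F0_sub_carr)
  next
    case (step1 i)
    show ?case
    proof
      fix h assume h: "h \<in> H0"
      have ch: "cj (-1) h \<in> H0" using h by (rule cj_F0)
      have ti: "t [^]\<^bsub>?B\<^esub> (i + 1) = t [^]\<^bsub>?B\<^esub> i \<otimes>\<^bsub>?B\<^esub> t"
        using B.int_pow_mult[OF tB, of i 1] tB by simp
      have "t [^]\<^bsub>?B\<^esub> (i + 1) \<otimes>\<^bsub>?B\<^esub> \<phi> h = t [^]\<^bsub>?B\<^esub> i \<otimes>\<^bsub>?B\<^esub> (t \<otimes>\<^bsub>?B\<^esub> \<phi> h)"
        using tB phB[OF h] by (simp add: ti B.m_assoc)
      also have "\<dots> = (t [^]\<^bsub>?B\<^esub> i \<otimes>\<^bsub>?B\<^esub> \<phi> (cj (-1) h)) \<otimes>\<^bsub>?B\<^esub> t"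
        using tB phB[OF ch] by (simp add: key1[OF h] B.m_assoc)
      also have "\<dots> = \<phi> (cj (-i) (cj (-1) h)) \<otimes>\<^bsub>?B\<^esub> t [^]\<^bsub>?B\<^esub> (i + 1)"
        using step1.IH ch tB phB cj_F0 by (simp add: ti B.m_assoc)
      also have "cj (-i) (cj (-1) h) = cj (- (i + 1)) h"
        using cj_cj[OF F0_sub_carr[OF h], of "-i" "-1"] by (simp add: add.commute)
      finally show "t [^]\<^bsub>?B\<^esub> (i + 1) \<otimes>\<^bsub>?B\<^esub> \<phi> h = \<phi> (cj (- (i + 1)) h) \<otimes>\<^bsub>?B\<^esub> t [^]\<^bsub>?B\<^esub> (i + 1)" .
    qed
  next
    case (step2 i)
    show ?case
    proof
      fix h assume h: "h \<in> H0"
      have ch: "cj 1 h \<in> H0" using h by (rule cj_F0)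
      have ti: "t [^]\<^bsub>?B\<^esub> (i - 1) = t [^]\<^bsub>?B\<^esub> i \<otimes>\<^bsub>?B\<^esub> inv\<^bsub>?B\<^esub> t"
        using B.int_pow_mult[OF tB, of i "-1"] tm1 by simp
      have "t [^]\<^bsub>?B\<^esub> (i - 1) \<otimes>\<^bsub>?B\<^esub> \<phi> h = t [^]\<^bsub>?B\<^esub> i \<otimes>\<^bsub>?B\<^esub> (inv\<^bsub>?B\<^esub> t \<otimes>\<^bsub>?B\<^esub> \<phi> h)"
        using tB phB[OF h] by (simp add: ti B.m_assoc)
      also have "\<dots> = (t [^]\<^bsub>?B\<^esub> i \<otimes>\<^bsub>?B\<^esub> \<phi> (cj 1 h)) \<otimes>\<^bsub>?B\<^esub> inv\<^bsub>?B\<^esub> t"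
        using tB phB[OF ch] by (simp add: key2[OF h] B.m_assoc)
      also have "\<dots> = \<phi> (cj (-i) (cj 1 h)) \<otimes>\<^bsub>?B\<^esub> t [^]\<^bsub>?B\<^esub> (i - 1)"
        using step2.IH ch tB phB cj_F0 by (simp add: ti B.m_assoc)
      also have "cj (-i) (cj 1 h) = cj (- (i - 1)) h"
        using cj_cj[OF F0_sub_carr[OF h], of "-i" "1"] by simp
      finally show "t [^]\<^bsub>?B\<^esub> (i - 1) \<otimes>\<^bsub>?B\<^esub> \<phi> h = \<phi> (cj (- (i - 1)) h) \<otimes>\<^bsub>?B\<^esub> t [^]\<^bsub>?B\<^esub> (i - 1)" .
    qed
  qed
  define p where "p = (\<lambda>w. w \<otimes>\<^bsub>Gm\<^esub> z1 [^]\<^bsub>Gm\<^esub> (- upsilon w))"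
  have pH: "p w \<in> H0" if w: "w \<in> carrier Gm" for w
    using w by (simp add: p_def F0_carrier upsilon_mult upsilon_zpow)
  have pmul: "p u \<otimes>\<^bsub>Gm\<^esub> cj (- upsilon u) (p v) = p (u \<otimes>\<^bsub>Gm\<^esub> v)"
    if u: "u \<in> carrier Gm" and v: "v \<in> carrier Gm" for u v
  proof -
    let ?a = "upsilon u" and ?b = "upsilon v"
    let ?za = "z1 [^]\<^bsub>Gm\<^esub> (- ?a)" and ?zb = "z1 [^]\<^bsub>Gm\<^esub> (- ?b)"
    have "p u \<otimes>\<^bsub>Gm\<^esub> cj (- ?a) (p v) = u \<otimes>\<^bsub>Gm\<^esub> v \<otimes>\<^bsub>Gm\<^esub> (?zb \<otimes>\<^bsub>Gm\<^esub> ?za)"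
      unfolding p_def cj_def using u v by (simp add: G.m_assoc canc)
    also have "?zb \<otimes>\<^bsub>Gm\<^esub> ?za = z1 [^]\<^bsub>Gm\<^esub> (- upsilon (u \<otimes>\<^bsub>Gm\<^esub> v))"
      using G.int_pow_mult[OF z1_carr, of "- ?b" "- ?a"] by (simp add: upsilon_mult add.commute)
    finally show ?thesis unfolding p_def .
  qed
  define \<psi> where "\<psi> = (\<lambda>w. \<phi> (p w) \<otimes>\<^bsub>?B\<^esub> t [^]\<^bsub>?B\<^esub> upsilon w)"
  have psiB: "\<psi> w \<in> carrier ?B" if "w \<in> carrier Gm" for w
    using that pH phB tB by (simp add: \<psi>_def)
  have psimul: "\<psi> (u \<otimes>\<^bsub>Gm\<^esub> v) = \<psi> u \<otimes>\<^bsub>?B\<^esub> \<psi> v"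
    if u: "u \<in> carrier Gm" and v: "v \<in> carrier Gm" for u v
  proof -
    let ?a = "upsilon u" and ?b = "upsilon v"
    have pu: "\<phi> (p u) \<in> carrier ?B" and pv: "\<phi> (p v) \<in> carrier ?B" using phB pH u v by auto
    have cpv: "cj (- ?a) (p v) \<in> H0" using pH[OF v] by (rule cj_F0)
    have "\<psi> u \<otimes>\<^bsub>?B\<^esub> \<psi> v = \<phi> (p u) \<otimes>\<^bsub>?B\<^esub> (t [^]\<^bsub>?B\<^esub> ?a \<otimes>\<^bsub>?B\<^esub> \<phi> (p v)) \<otimes>\<^bsub>?B\<^esub> t [^]\<^bsub>?B\<^esub> ?b"
      unfolding \<psi>_def using pu pv tB by (simp add: B.m_assoc)
    also have "\<dots> = \<phi> (p u) \<otimes>\<^bsub>?B\<^esub> (\<phi> (cj (- ?a) (p v)) \<otimes>\<^bsub>?B\<^esub> t [^]\<^bsub>?B\<^esub> ?a) \<otimes>\<^bsub>?B\<^esub> t [^]\<^bsub>?B\<^esub> ?b"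
      using keyN pH[OF v] by simp
    also have "\<dots> = (\<phi> (p u) \<otimes>\<^bsub>?B\<^esub> \<phi> (cj (- ?a) (p v))) \<otimes>\<^bsub>?B\<^esub> (t [^]\<^bsub>?B\<^esub> ?a \<otimes>\<^bsub>?B\<^esub> t [^]\<^bsub>?B\<^esub> ?b)"
      using pu phB[OF cpv] tB by (simp add: B.m_assoc)
    also have "\<dots> = \<phi> (p u \<otimes>\<^bsub>Gm\<^esub> cj (- ?a) (p v)) \<otimes>\<^bsub>?B\<^esub> t [^]\<^bsub>?B\<^esub> (?a + ?b)"
      using phM[OF pH[OF u] cpv] B.int_pow_mult[OF tB, of ?a ?b] by simp
    also have "\<dots> = \<psi> (u \<otimes>\<^bsub>Gm\<^esub> v)"
      unfolding \<psi>_def pmul[OF u v] by (simp add: upsilon_mult)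
    finally show ?thesis by simp
  qed
  have "group_action (FG m) S \<psi>"
    unfolding group_action_def group_hom_def group_hom_axioms_def hom_def
    using G.is_group B.is_group psiB psimul by (auto simp: Pi_def)
  moreover have "\<forall>g \<in> carrier (F0 m). \<psi> g = \<phi> g"
  proof
    fix g assume g: "g \<in> carrier (F0 m)"
    then have u0: "upsilon g = 0" and gc: "g \<in> carrier Gm" by (auto simp: F0_carrier)
    have "p g = g" using gc u0 by (simp add: p_def)
    then show "\<psi> g = \<phi> g" using u0 phB[OF g] by (simp add: \<psi>_def)
  qed
  ultimately show ?thesis by blast
qed

end

theorem lemma5p6:
  fixes m :: nat and S :: "'a set" and \<phi> :: "fword \<Rightarrow> 'a \<Rightarrow> 'a"
  assumes "m \<ge> 1"
    and "group_action (F0 m) S \<phi>"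
    and "finite S"
    and "\<forall>X \<in> orbits (F0 m) S \<phi>. strongly_finite_transitive m X (restr_act \<phi> X)"
  shows "(\<exists>\<psi>. group_action (FG m) S \<psi> \<and> (\<forall>g \<in> carrier (F0 m). \<psi> g = \<phi> g))
     \<longleftrightarrow> (\<forall>(Orb :: nat set) \<tau>. strongly_finite_transitive m Orb \<tau> \<longrightarrow>
            multiplicity_in m S \<phi> Orb \<tau> = multiplicity_in m S \<phi> Orb (zshift m 1 \<tau>))"
proof -
  interpret FGctx m using assms(1) by unfold_locales
  show ?thesis
  proof
    assume "\<exists>\<psi>. group_action (FG m) S \<psi> \<and> (\<forall>g \<in> carrier (F0 m). \<psi> g = \<phi> g)"
    then obtain \<psi> where p: "group_action (FG m) S \<psi>" "\<forall>g \<in> carrier (F0 m). \<psi> g = \<phi> g" by blast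
    show "\<forall>(Orb :: nat set) \<tau>. strongly_finite_transitive m Orb \<tau> \<longrightarrow>
            multiplicity_in m S \<phi> Orb \<tau> = multiplicity_in m S \<phi> Orb (zshift m 1 \<tau>)"
      by (rule fwd[OF assms(2) assms(4) p(1) p(2)])
  next
    assume h: "\<forall>(Orb :: nat set) \<tau>. strongly_finite_transitive m Orb \<tau> \<longrightarrow>
            multiplicity_in m S \<phi> Orb \<tau> = multiplicity_in m S \<phi> Orb (zshift m 1 \<tau>)"
    obtain T where T: "bij_betw T S S" "\<forall>g\<in>carrier (F0 m). \<forall>s\<in>S. T (\<phi> (cj 1 g) s) = \<phi> g (T s)"
      using bwd_T[OF assms(2) assms(3) assms(4) h] by blast
    show "\<exists>\<psi>. group_action (FG m) S \<psi> \<and> (\<forall>g \<in> carrier (F0 m). \<psi> g = \<phi> g)"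
      by (rule extend[OF assms(2) T(1) T(2)])
  qed
qed

end
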